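(* Let $X\subseteq\mathbb{P}^n$ be a reduced non-degenerate scheme which is set-theoretically defined by quadrics. If $W\subseteq\mathbb{P}^n$ is a projective linear subspace of dimension $p$ such that $\Gamma:=W\cap X$ is zero-dimensional and contains $p+2$ real reduced points, then $\eta(X)\leq p$.
   Context: $S=\mathbb{R}[x_0,\dots,x_n]$, $R=S/I(X)$. $\Sigma_X\subseteq R_2$ is the cone of sums of squares of elements of $R_1$; its dual $\Sigma_X^*$ is regarded inside $S_2^*$. For $\ell\in S_2^*$, the rank of $\ell$ is the rank of the bilinear form $(f,g)\mapsto\ell(fg)$ on $S_1$. The Hankel index $\eta(X)$ is the smallest integer $p>1$ such that $\Sigma_X^*$ has an extreme ray of rank $p$ ($\infty$ if all extreme rays have rank $1$). $X$ is set-theoretically defined by quadrics if $X=\mathbb{V}(I(X)_2)$ as sets. *)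

theory Defs
  imports "HOL-Analysis.Analysis" "HOL-Library.Extended_Nat"
begin

text \<open>Coordinates x_0..x_n of P^n are indexed by a finite type 'n (so n+1 = CARD('n)).
 Homogeneous forms of degree d in S = R[x_0..x_n] are coefficient functions on
 monomials (exponent vectors 'n => nat), supported on monomials of degree d.\<close>

definition mons :: "nat \<Rightarrow> ('n::finite \<Rightarrow> nat) set" where
  "mons d = {\<alpha>. sum \<alpha> UNIV = d}"

definition is_form :: "nat \<Rightarrow> (('n::finite \<Rightarrow> nat) \<Rightarrow> real) \<Rightarrow> bool" where
  "is_form d f \<longleftrightarrow> (\<forall>\<alpha>. f \<alpha> \<noteq> 0 \<longrightarrow> \<alpha> \<in> mons d)"

definition ceval :: "nat \<Rightarrow> (('n::finite \<Rightarrow> nat) \<Rightarrow> real) \<Rightarrow> complex^'n \<Rightarrow> complex" where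
  "ceval d f z = (\<Sum>\<alpha>\<in>mons d. complex_of_real (f \<alpha>) * (\<Prod>i\<in>UNIV. (z$i) ^ (\<alpha> i)))"

definition reval :: "nat \<Rightarrow> (('n::finite \<Rightarrow> nat) \<Rightarrow> real) \<Rightarrow> real^'n \<Rightarrow> real" where
  "reval d f x = (\<Sum>\<alpha>\<in>mons d. f \<alpha> * (\<Prod>i\<in>UNIV. (x$i) ^ (\<alpha> i)))"

definition cvec :: "real^'n \<Rightarrow> complex^'n" where
  "cvec x = (\<chi> i. complex_of_real (x$i))"

text \<open>The (affine cone over the) reduced scheme X = V(F), F a set of real homogeneous
 forms given with their degrees; its points are the complex points.\<close>
definition Xpts :: "(nat \<times> (('n::finite \<Rightarrow> nat) \<Rightarrow> real)) set \<Rightarrow> (complex^'n) set" where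
  "Xpts F = {z. \<forall>(d,f)\<in>F. ceval d f z = 0}"

definition idealX :: "(complex^'n) set \<Rightarrow> nat \<Rightarrow> (('n::finite \<Rightarrow> nat) \<Rightarrow> real) set" where
  "idealX Z d = {f. is_form d f \<and> (\<forall>z\<in>Z. ceval d f z = 0)}"

definition mon2 :: "'n \<Rightarrow> 'n \<Rightarrow> ('n::finite \<Rightarrow> nat)" where
  "mon2 i j = (\<lambda>k. (if k = i then 1 else 0) + (if k = j then 1 else 0))"

definition linprod :: "real^'n \<Rightarrow> real^'n \<Rightarrow> (('n::finite \<Rightarrow> nat) \<Rightarrow> real)" where
  "linprod a b = (\<lambda>\<alpha>. \<Sum>i\<in>UNIV. \<Sum>j\<in>UNIV. if mon2 i j = \<alpha> then a$i * b$j else 0)"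

text \<open>Elements of S_2^*: functionals given by their values on the degree-2 monomials.\<close>
definition is_dual2 :: "(('n::finite \<Rightarrow> nat) \<Rightarrow> real) \<Rightarrow> bool" where
  "is_dual2 l \<longleftrightarrow> (\<forall>\<alpha>. l \<alpha> \<noteq> 0 \<longrightarrow> \<alpha> \<in> mons 2)"

definition pairing :: "(('n::finite \<Rightarrow> nat) \<Rightarrow> real) \<Rightarrow> (('n \<Rightarrow> nat) \<Rightarrow> real) \<Rightarrow> real" where
  "pairing l f = (\<Sum>\<alpha>\<in>mons 2. l \<alpha> * f \<alpha>)"

text \<open>Sigma_X^*: functionals on S_2 vanishing on I(X)_2 and nonnegative on squares of
 linear forms (i.e. the dual of the cone of sums of squares in R_2).\<close>
definition sigma_dual :: "(complex^'n) set \<Rightarrow> (('n::finite \<Rightarrow> nat) \<Rightarrow> real) set" where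
  "sigma_dual Z = {l. is_dual2 l \<and> (\<forall>f\<in>idealX Z 2. pairing l f = 0)
                     \<and> (\<forall>h. pairing l (linprod h h) \<ge> 0)}"

text \<open>Rank of l: rank of the bilinear form (f,g) |-> l(fg) on S_1 (Gram matrix in the basis x_i).\<close>
definition lrank :: "(('n::finite \<Rightarrow> nat) \<Rightarrow> real) \<Rightarrow> nat" where
  "lrank l = rank ((\<chi> i j. l (mon2 i j)) :: real^'n^'n)"

definition extreme_ray :: "(('n::finite \<Rightarrow> nat) \<Rightarrow> real) set \<Rightarrow> (('n \<Rightarrow> nat) \<Rightarrow> real) \<Rightarrow> bool" where
  "extreme_ray C l \<longleftrightarrow> l \<in> C \<and> l \<noteq> (\<lambda>_. 0) \<and>
     (\<forall>a\<in>C. \<forall>b\<in>C. l = (\<lambda>\<alpha>. a \<alpha> + b \<alpha>) \<longrightarrow> (\<exists>t\<ge>0. a = (\<lambda>\<alpha>. t * l \<alpha>)))"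

definition hankel_index :: "(complex^'n::finite) set \<Rightarrow> enat" where
  "hankel_index Z =
     (if \<exists>l. extreme_ray (sigma_dual Z) l \<and> lrank l > 1
      then enat (LEAST r. r > 1 \<and> (\<exists>l. extreme_ray (sigma_dual Z) l \<and> lrank l = r))
      else \<infinity>)"

text \<open>Complex points of the cone over the projective linear subspace W = P(L).\<close>
definition in_span_C :: "(real^'n::finite) set \<Rightarrow> complex^'n \<Rightarrow> bool" where
  "in_span_C L z \<longleftrightarrow> (\<forall>a::real^'n. (\<forall>v\<in>L. a \<bullet> v = 0) \<longrightarrow>
                         (\<Sum>i\<in>UNIV. complex_of_real (a$i) * z$i) = 0)"

text \<open>The scheme Gamma = W \<inter> X (ideal I(X) + I(W)) is reduced at the real point [q]:
 its Zariski tangent space at q is zero, i.e. the tangent space of the affine cone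
 over Gamma at q is the line spanned by q.\<close>
definition reduced_point :: "(complex^'n::finite) set \<Rightarrow> (real^'n) set \<Rightarrow> real^'n \<Rightarrow> bool" where
  "reduced_point Z L q \<longleftrightarrow>
     (\<forall>v\<in>L. (\<forall>d. \<forall>f\<in>idealX Z d. ((\<lambda>t. reval d f (q + t *\<^sub>R v)) has_real_derivative 0) (at 0))
              \<longrightarrow> v \<in> span {q})"

end

theory Submission
  imports Defs
begin


lemma finite_mons: "finite (mons d :: ('n::finite \<Rightarrow> nat) set)"
proof -
  have "mons d \<subseteq> (\<Pi>\<^sub>E i\<in>(UNIV::'n set). {..d})"
    by (auto simp: mons_def PiE_def extensional_def intro: member_le_sum[of _ UNIV _, simplified])
  moreover have "finite (\<Pi>\<^sub>E i\<in>(UNIV::'n set). {..d})" by (rule finite_PiE) auto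
  ultimately show ?thesis by (rule finite_subset)
qed

lemma mon2_in: "mon2 i j \<in> mons 2"
  by (simp add: mons_def mon2_def sum.distrib)

lemma mon2_sym: "mon2 i j = mon2 j i"
  by (auto simp: mon2_def)

definition gram :: "(('n::finite \<Rightarrow> nat) \<Rightarrow> real) \<Rightarrow> real^'n^'n" where
  "gram l = (\<chi> i j. l (mon2 i j))"

definition qf :: "real^'n^'n \<Rightarrow> real^'n::finite \<Rightarrow> real" where
  "qf G h = (\<Sum>i\<in>UNIV. \<Sum>j\<in>UNIV. h$i * G$i$j * h$j)"

lemma pairing_linprod:
  "pairing l (linprod a b) = (\<Sum>i\<in>UNIV. \<Sum>j\<in>UNIV. a$i * l (mon2 i j) * b$j)"
proof -
  have "pairing l (linprod a b) = (\<Sum>\<alpha>\<in>mons 2. \<Sum>i\<in>UNIV. \<Sum>j\<in>UNIV. if mon2 i j = \<alpha> then a$i * l (mon2 i j) * b$j else 0)"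
    unfolding pairing_def linprod_def
    by (auto simp: sum_distrib_left intro!: sum.cong)
  also have "\<dots> = (\<Sum>i\<in>UNIV. \<Sum>j\<in>UNIV. \<Sum>\<alpha>\<in>mons 2. if mon2 i j = \<alpha> then a$i * l (mon2 i j) * b$j else 0)"
    by (subst sum.swap) (simp add: sum.swap[of _ "mons 2"])
  also have "\<dots> = (\<Sum>i\<in>UNIV. \<Sum>j\<in>UNIV. a$i * l (mon2 i j) * b$j)"
    by (simp add: finite_mons mon2_in)
  finally show ?thesis .
qed

lemma pairing_Q: "pairing l (linprod h h) = qf (gram l) h"
  by (simp add: pairing_linprod qf_def gram_def)




lemma mons2_decomp:
  assumes "\<alpha> \<in> mons 2" shows "\<exists>i j. \<alpha> = mon2 i j"
proof -
  have s: "sum \<alpha> UNIV = 2" using assms by (simp add: mons_def)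
  have "\<exists>i. \<alpha> i > 0"
  proof (rule ccontr)
    assume "\<not> (\<exists>i. \<alpha> i > 0)"
    then have "\<forall>i. \<alpha> i = 0" by auto
    then have "sum \<alpha> UNIV = 0" by simp
    with s show False by simp
  qed
  then obtain i where i: "\<alpha> i > 0" by blast
  have s1: "\<alpha> i + sum \<alpha> (UNIV - {i}) = 2"
    using s sum.remove[of UNIV i \<alpha>] by simp
  have le: "\<alpha> i \<le> 2" using s1 by linarith
  show ?thesis
  proof (cases "\<alpha> i = 2")
    case True
    then have "sum \<alpha> (UNIV - {i}) = 0" using s1 by simp
    then have "\<forall>k\<in>UNIV - {i}. \<alpha> k = 0" by simp
    then have "\<alpha> = mon2 i i" using True by (auto simp: mon2_def)
    then show ?thesis by blast
  next
    case False
    then have ai: "\<alpha> i = 1" using i le by linarith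
    then have s2: "sum \<alpha> (UNIV - {i}) = 1" using s1 by simp
    have "\<exists>j\<in>UNIV - {i}. \<alpha> j > 0"
    proof (rule ccontr)
      assume "\<not> (\<exists>j\<in>UNIV - {i}. \<alpha> j > 0)"
      then have "\<forall>j\<in>UNIV - {i}. \<alpha> j = 0" by auto
      then have "sum \<alpha> (UNIV - {i}) = 0" by simp
      with s2 show False by simp
    qed
    then obtain j where j: "j \<in> UNIV - {i}" "\<alpha> j > 0" by blast
    have "\<alpha> j + sum \<alpha> (UNIV - {i} - {j}) = 1"
      using s2 j sum.remove[of "UNIV - {i}" j \<alpha>] by simp
    moreover have "\<alpha> j \<le> 1" using calculation by linarith
    ultimately have aj: "\<alpha> j = 1" and r: "sum \<alpha> (UNIV - {i} - {j}) = 0" using j by linarith+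
    then have "\<forall>k\<in>UNIV - {i} - {j}. \<alpha> k = 0" by simp
    then have "\<alpha> = mon2 i j" using ai aj j by (auto simp: mon2_def)
    then show ?thesis by blast
  qed
qed

lemma gram_inj:
  assumes "is_dual2 a" "is_dual2 b" "gram a = gram b" shows "a = b"
proof
  fix \<alpha>
  show "a \<alpha> = b \<alpha>"
  proof (cases "\<alpha> \<in> mons 2")
    case True
    then obtain i j where ij: "\<alpha> = mon2 i j" using mons2_decomp by blast
    have "gram a $ i $ j = gram b $ i $ j" using assms(3) by simp
    then show ?thesis by (simp add: gram_def ij)
  next
    case False then show ?thesis using assms(1,2) unfolding is_dual2_def by metis
  qed
qed

definition evp :: "real^'n \<Rightarrow> (('n::finite \<Rightarrow> nat) \<Rightarrow> real)" where
  "evp x = (\<lambda>\<alpha>. if \<alpha> \<in> mons 2 then \<Prod>i\<in>UNIV. x$i ^ \<alpha> i else 0)"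

lemma evp_dual2: "is_dual2 (evp x)"
  by (simp add: is_dual2_def evp_def)

lemma prod_mon2: "(\<Prod>k\<in>UNIV. (x::real^'n::finite)$k ^ mon2 i j k) = x$i * x$j"
proof -
  have "(\<Prod>k\<in>UNIV. x$k ^ mon2 i j k) = (\<Prod>k\<in>UNIV. (if k = i then x$k else 1) * (if k = j then x$k else 1))"
    by (rule prod.cong) (auto simp: mon2_def power_add)
  also have "\<dots> = x$i * x$j" by (simp add: prod.distrib)
  finally show ?thesis .
qed

lemma gram_evp: "gram (evp x) = (\<chi> i j. x$i * x$j)"
  by (simp add: gram_def evp_def mon2_in prod_mon2)

lemma pairing_evp: "pairing (evp x) f = reval 2 f x"
  by (simp add: pairing_def evp_def reval_def mult.commute)

lemma ceval_cvec: "ceval d f (cvec x) = complex_of_real (reval d f x)"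
  by (simp add: ceval_def reval_def cvec_def)

lemma pairing_add: "pairing (\<lambda>\<alpha>. a \<alpha> + b \<alpha>) f = pairing a f + pairing b f"
  by (simp add: pairing_def algebra_simps sum.distrib)
lemma pairing_diff: "pairing (\<lambda>\<alpha>. a \<alpha> - b \<alpha>) f = pairing a f - pairing b f"
  by (simp add: pairing_def algebra_simps sum_subtractf)
lemma pairing_scale: "pairing (\<lambda>\<alpha>. t * a \<alpha>) f = t * pairing a f"
  by (simp add: pairing_def algebra_simps sum_distrib_left)
lemma pairing_sum: "pairing (\<lambda>\<alpha>. \<Sum>x\<in>S. a x \<alpha>) f = (\<Sum>x\<in>S. pairing (a x) f)"
  by (simp add: pairing_def sum_distrib_right sum.swap[of _ "mons 2"])

lemma gram_add: "gram (\<lambda>\<alpha>. a \<alpha> + b \<alpha>) = gram a + gram b"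
  by (simp add: gram_def vec_eq_iff)
lemma gram_diff: "gram (\<lambda>\<alpha>. a \<alpha> - b \<alpha>) = gram a - gram b"
  by (simp add: gram_def vec_eq_iff)
lemma gram_scale: "gram (\<lambda>\<alpha>. t * a \<alpha>) = t *\<^sub>R gram a"
  by (simp add: gram_def vec_eq_iff)
lemma gram_sum: "gram (\<lambda>\<alpha>. \<Sum>x\<in>S. a x \<alpha>) = (\<Sum>x\<in>S. gram (a x))"
  by (simp add: gram_def vec_eq_iff sum_component)

lemma qf_add: "qf (G + H) h = qf G h + qf H h"
  by (simp add: qf_def algebra_simps sum.distrib)
lemma qf_diff: "qf (G - H) h = qf G h - qf H h"
  by (simp add: qf_def algebra_simps sum_subtractf)
lemma qf_scale: "qf (t *\<^sub>R G) h = t * qf G h"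
  by (simp add: qf_def algebra_simps sum_distrib_left)
lemma qf_zero: "qf 0 h = 0" by (simp add: qf_def)
lemma qf_sum: "qf (\<Sum>x\<in>S. G x) h = (\<Sum>x\<in>S. qf (G x) h)"
  by (induction S rule: infinite_finite_induct) (simp_all add: qf_add qf_zero)

lemma qf_outer: "qf (\<chi> i j. x$i * x$j) h = (h \<bullet> x)^2"
  by (simp add: qf_def inner_vec_def power2_eq_square sum_product algebra_simps)

lemma gram_sym: "gram l $ i $ j = gram l $ j $ i"
  by (simp add: gram_def mon2_sym)

lemma sd_iff: "l \<in> sigma_dual Z \<longleftrightarrow> is_dual2 l \<and> (\<forall>f\<in>idealX Z 2. pairing l f = 0) \<and> (\<forall>h. qf (gram l) h \<ge> 0)"
  by (simp add: sigma_dual_def pairing_Q)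




lemma qf_inner: "qf G h = h \<bullet> (G *v h)"
  by (simp add: qf_def inner_vec_def matrix_vector_mult_def sum_distrib_left algebra_simps)

lemma sym_inner:
  assumes sym: "\<forall>i j. G$i$j = G$j$i"
  shows "k \<bullet> (G *v e) = e \<bullet> (G *v (k::real^'n::finite))"
proof -
  have 1: "k \<bullet> (G *v e) = (\<Sum>i\<in>UNIV. \<Sum>j\<in>UNIV. k$i * G$i$j * e$j)"
    by (simp add: inner_vec_def matrix_vector_mult_def sum_distrib_left mult.assoc)
  have 2: "e \<bullet> (G *v k) = (\<Sum>j\<in>UNIV. \<Sum>i\<in>UNIV. e$j * G$j$i * k$i)"
    by (simp add: inner_vec_def matrix_vector_mult_def sum_distrib_left mult.assoc)
  have 3: "(\<Sum>j\<in>UNIV. \<Sum>i\<in>UNIV. e$j * G$j$i * k$i) = (\<Sum>i\<in>UNIV. \<Sum>j\<in>UNIV. k$i * G$i$j * e$j)"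
    apply (subst sum.swap)
    apply (intro sum.cong refl)
    by (metis sym mult.commute mult.assoc)
  show ?thesis using 1 2 3 by simp
qed

lemma quad_nonneg_lin:
  fixes b c :: real
  assumes "\<forall>t. 2*t*b + t^2*c \<ge> 0" "c \<ge> 0" shows "b = 0"
proof (rule ccontr)
  assume b: "b \<noteq> 0"
  define t where "t = - b/(c+1)"
  have c1: "c + 1 > 0" using assms(2) by simp
  have e1: "2*t*b + t^2*c = t*(2*b + t*c)" by (simp add: power2_eq_square algebra_simps)
  have e2: "2*b + t*c = b*(c+2)/(c+1)" using c1 by (simp add: t_def field_simps)
  have "t*(2*b + t*c) = (-b/(c+1))*(b*(c+2)/(c+1))"
    unfolding e2 by (simp add: t_def)
  also have "\<dots> < 0"
  proof (cases "b > 0")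
    case True
    then show ?thesis using c1 by (intro mult_neg_pos) (auto intro!: divide_pos_pos)
  next
    case False
    then have "b < 0" using b by simp
    then show ?thesis using c1 by (intro mult_pos_neg) (auto intro!: divide_pos_pos divide_neg_pos mult_neg_pos)
  qed
  finally have "2*t*b + t^2*c < 0" using e1 by simp
  then show False using assms(1) by (metis not_le)
qed

lemma psd_kernel:
  assumes psd: "\<forall>h. qf G h \<ge> 0" and sym: "\<forall>i j. G$i$j = G$j$i" and k: "qf G k = 0"
  shows "G *v k = 0"
proof -
  define e where "e = G *v k"
  have "\<forall>t. 2*t*(e \<bullet> (G *v k)) + t^2*(qf G e) \<ge> 0"
  proof
    fix t
    have "qf G (k + t *\<^sub>R e) = qf G k + t * (k \<bullet> (G *v e)) + t * (e \<bullet> (G *v k)) + t^2 * qf G e"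
      by (simp add: qf_inner matrix_vector_right_distrib inner_add_left inner_add_right
          matrix_vector_mult_scaleR algebra_simps power2_eq_square)
    also have "\<dots> = 2*t*(e \<bullet> (G *v k)) + t^2*(qf G e)"
      using sym_inner[OF sym, of k e] k by simp
    finally show "2*t*(e \<bullet> (G *v k)) + t^2*(qf G e) \<ge> 0" using psd by metis
  qed
  then have "e \<bullet> (G *v k) = 0" using quad_nonneg_lin psd by blast
  then show ?thesis by (simp add: e_def)
qed

lemma mat_zero_if_mult:
  fixes G :: "real^'n::finite^'m::finite"
  assumes "\<forall>h. G *v h = 0" shows "G = 0"
proof -
  have "\<And>i j. G$i$j = 0"
  proof -
    fix i j
    have "(G *v axis j 1)$i = G$i$j"
      by (simp add: matrix_vector_mult_basis column_def)
    then show "G$i$j = 0" using assms by simp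
  qed
  then show ?thesis by (simp add: vec_eq_iff)
qed

lemma gram_sym': "\<forall>i j. gram l $i$j = gram l $j$i"
  using gram_sym by blast

lemma sd_qf: "l \<in> sigma_dual Z \<Longrightarrow> qf (gram l) h \<ge> 0"
  by (simp add: sd_iff)

lemma sd_kernel: "l \<in> sigma_dual Z \<Longrightarrow> qf (gram l) k = 0 \<Longrightarrow> gram l *v k = 0"
  by (rule psd_kernel) (auto simp: sd_iff gram_sym')

lemma dual2_zero_gram: "is_dual2 l \<Longrightarrow> gram l = 0 \<Longrightarrow> l = (\<lambda>_. 0)"
  by (rule gram_inj) (auto simp: is_dual2_def gram_def vec_eq_iff)

lemma dual2_add: "is_dual2 a \<Longrightarrow> is_dual2 b \<Longrightarrow> is_dual2 (\<lambda>\<alpha>. a \<alpha> + b \<alpha>)"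
  unfolding is_dual2_def by (metis add.left_neutral)
lemma dual2_lin: "is_dual2 a \<Longrightarrow> is_dual2 b \<Longrightarrow> is_dual2 (\<lambda>\<alpha>. a \<alpha> - t * b \<alpha>)"
  unfolding is_dual2_def by (metis diff_zero mult_zero_right)
lemma dual2_scale: "is_dual2 a \<Longrightarrow> is_dual2 (\<lambda>\<alpha>. t * a \<alpha>)"
  unfolding is_dual2_def by (metis mult_zero_right)

lemma sd_add: "a \<in> sigma_dual Z \<Longrightarrow> b \<in> sigma_dual Z \<Longrightarrow> (\<lambda>\<alpha>. a \<alpha> + b \<alpha>) \<in> sigma_dual Z"
  by (auto simp: sd_iff gram_add qf_add pairing_add dual2_add add_nonneg_nonneg)

lemma sd_scale: "a \<in> sigma_dual Z \<Longrightarrow> t \<ge> 0 \<Longrightarrow> (\<lambda>\<alpha>. t * a \<alpha>) \<in> sigma_dual Z"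
  by (auto simp: sd_iff gram_scale qf_scale pairing_scale dual2_scale)

lemma sd_pointed:
  assumes "a \<in> sigma_dual Z" "(\<lambda>\<alpha>. - a \<alpha>) \<in> sigma_dual Z" shows "a = (\<lambda>_. 0)"
proof -
  have g: "gram (\<lambda>\<alpha>. - a \<alpha>) = - gram a" by (simp add: gram_def vec_eq_iff)
  have "\<forall>h. qf (gram a) h = 0"
  proof
    fix h
    have "qf (gram (\<lambda>\<alpha>. - a \<alpha>)) h = - qf (gram a) h" unfolding g
      using qf_scale[of "-1" "gram a" h] by simp
    then show "qf (gram a) h = 0" using sd_qf[OF assms(1), of h] sd_qf[OF assms(2), of h] by simp
  qed
  then have "\<forall>h. gram a *v h = 0" using sd_kernel[OF assms(1)] by blast
  then have "gram a = 0" by (rule mat_zero_if_mult)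
  then show ?thesis using assms(1) dual2_zero_gram by (auto simp: sd_iff)
qed

definition lower :: "(complex^'n) set \<Rightarrow> (('n::finite \<Rightarrow> nat) \<Rightarrow> real) \<Rightarrow> (('n \<Rightarrow> nat) \<Rightarrow> real) set" where
  "lower Z l = {a. a \<in> sigma_dual Z \<and> (\<lambda>\<alpha>. l \<alpha> - a \<alpha>) \<in> sigma_dual Z}"

lemma sd_lin:
  assumes "l \<in> sigma_dual Z" "a \<in> sigma_dual Z" "\<forall>h. qf (gram l) h - t * qf (gram a) h \<ge> 0"
  shows "(\<lambda>\<alpha>. l \<alpha> - t * a \<alpha>) \<in> sigma_dual Z"
proof -
  have g: "gram (\<lambda>\<alpha>. l \<alpha> - t * a \<alpha>) = gram l - t *\<^sub>R gram a"
    by (simp add: gram_def vec_eq_iff)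
  have p: "pairing (\<lambda>\<alpha>. l \<alpha> - t * a \<alpha>) f = pairing l f - t * pairing a f" for f
    by (simp add: pairing_def sum_subtractf sum_distrib_left algebra_simps)
  show ?thesis using assms unfolding sd_iff g
    by (auto simp: p qf_diff qf_scale dual2_lin)
qed

lemma exists_extreme:
  assumes l0: "L0 \<in> sigma_dual Z" "L0 \<noteq> (\<lambda>_. 0)"
  shows "\<exists>l. extreme_ray (sigma_dual Z) l \<and> l \<in> lower Z L0"
proof -
  define S where "S = {l. l \<in> lower Z L0 \<and> l \<noteq> (\<lambda>_. 0)}"
  define dm where "dm l = dim (span (gram ` lower Z l))" for l
  have z: "(\<lambda>_. 0) \<in> sigma_dual Z" by (simp add: sd_iff is_dual2_def pairing_def qf_def gram_def)
  have "L0 \<in> S" using l0 z by (simp add: S_def lower_def)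
  then obtain l where lS: "l \<in> S" and lmin: "\<And>l'. l' \<in> S \<Longrightarrow> dm l \<le> dm l'"
    using ex_has_least_nat[of "\<lambda>l. l \<in> S" L0 dm] by blast
  have lC: "l \<in> sigma_dual Z" and lne: "l \<noteq> (\<lambda>_. 0)" and ll: "(\<lambda>\<alpha>. L0 \<alpha> - l \<alpha>) \<in> sigma_dual Z"
    using lS by (auto simp: S_def lower_def)
  have "extreme_ray (sigma_dual Z) l"
    unfolding extreme_ray_def
  proof (intro conjI ballI impI lC lne)
    fix a b assume aC: "a \<in> sigma_dual Z" and bC: "b \<in> sigma_dual Z" and lab: "l = (\<lambda>\<alpha>. a \<alpha> + b \<alpha>)"
    show "\<exists>t\<ge>0. a = (\<lambda>\<alpha>. t * l \<alpha>)"
    proof (rule ccontr)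
      assume na: "\<not> (\<exists>t\<ge>0. a = (\<lambda>\<alpha>. t * l \<alpha>))"
      have n1: "a \<noteq> (\<lambda>\<alpha>. t * l \<alpha>)" for t
      proof
        assume at: "a = (\<lambda>\<alpha>. t * l \<alpha>)"
        then have tn: "t < 0" using na by (metis not_le)
        have "(\<lambda>\<alpha>. (1/(-t)) * a \<alpha>) \<in> sigma_dual Z" using sd_scale[of a Z "1/(-t)"] aC tn by simp
        moreover have "(\<lambda>\<alpha>. (1/(-t)) * a \<alpha>) = (\<lambda>\<alpha>. - l \<alpha>)" using at tn by auto
        ultimately have "l = (\<lambda>_. 0)" using sd_pointed lC by metis
        then show False using lne by simp
      qed
      define lt where "lt t = (\<lambda>\<alpha>. l \<alpha> - t * a \<alpha>)" for t
      define T where "T = {t. 0 \<le> t \<and> lt t \<in> sigma_dual Z}"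
      have lt1: "lt 1 = b" using lab by (auto simp: lt_def)
      have "1 \<in> T" using lt1 bC by (simp add: T_def)
      have qa: "qf (gram a) h \<ge> 0" for h using sd_qf[OF aC] .
      have ql: "qf (gram l) h \<ge> 0" for h using sd_qf[OF lC] .
      have qlt: "qf (gram (lt t)) h = qf (gram l) h - t * qf (gram a) h" for t h
      proof -
        have "gram (lt t) = gram l - t *\<^sub>R gram a" by (simp add: lt_def gram_def vec_eq_iff)
        then show ?thesis by (simp add: qf_diff qf_scale)
      qed
      have bdd: "\<exists>M. \<forall>t\<in>T. t \<le> M"
      proof (rule ccontr)
        assume nb: "\<not> (\<exists>M. \<forall>t\<in>T. t \<le> M)"
        have "(\<lambda>\<alpha>. - a \<alpha>) \<in> sigma_dual Z"
        proof -
          have nq: "qf (gram a) h \<le> 0" for h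
          proof (rule ccontr)
            assume pos: "\<not> qf (gram a) h \<le> 0"
            obtain t where t: "t \<in> T" "t > qf (gram l) h / qf (gram a) h" using nb by (meson not_le)
            have "qf (gram (lt t)) h \<ge> 0" using t(1) by (auto simp: T_def intro: sd_qf)
            moreover have "t * qf (gram a) h > qf (gram l) h" using t(2) pos
              by (simp add: pos_divide_less_eq)
            ultimately show False by (simp add: qlt)
          qed
          have g0: "qf (gram (\<lambda>_. 0)) h = 0" for h by (simp add: gram_def qf_def)
          have "\<forall>h. qf (gram (\<lambda>_. 0)) h - 1 * qf (gram a) h \<ge> 0" 
          proof
            fix h show "qf (gram (\<lambda>_. 0)) h - 1 * qf (gram a) h \<ge> 0" using nq[of h] g0[of h] by linarith
          qed
          then have "(\<lambda>\<alpha>. (\<lambda>_. 0) \<alpha> - 1 * a \<alpha>) \<in> sigma_dual Z"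
            by (rule sd_lin[OF z aC])
          then show ?thesis by simp
        qed
        then have "a = (\<lambda>_. 0)" using sd_pointed aC by metis
        then show False using n1[of 0] by simp
      qed
      obtain M where M: "\<forall>t\<in>T. t \<le> M" using bdd by blast
      define ts where "ts = Sup T"
      have bddT: "bdd_above T" using M by (auto simp: bdd_above_def)
      have Tne: "T \<noteq> {}" using \<open>1 \<in> T\<close> by auto
      have ts1: "1 \<le> ts" using cSup_upper[OF \<open>1 \<in> T\<close> bddT] ts_def by simp
      have T_le: "t \<le> ts" if "t \<in> T" for t using cSup_upper[OF that bddT] ts_def by simp
      have ltsC: "lt ts \<in> sigma_dual Z"
        unfolding lt_def
      proof (rule sd_lin[OF lC aC], rule allI)
        fix h
        show "qf (gram l) h - ts * qf (gram a) h \<ge> 0"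
        proof (cases "qf (gram a) h > 0")
          case True
          have "ts \<le> qf (gram l) h / qf (gram a) h"
            unfolding ts_def
          proof (rule cSup_least[OF Tne])
            fix t assume "t \<in> T"
            then have "qf (gram (lt t)) h \<ge> 0" by (auto simp: T_def intro: sd_qf)
            then show "t \<le> qf (gram l) h / qf (gram a) h" using True by (simp add: qlt pos_le_divide_eq)
          qed
          then show ?thesis using True by (simp add: pos_le_divide_eq)
        next
          case False
          then have "ts * qf (gram a) h \<le> 0" using ts1 by (simp add: mult_nonneg_nonpos)
          then show ?thesis using ql[of h] by simp
        qed
      qed
      have ltsne: "lt ts \<noteq> (\<lambda>_. 0)"
      proof
        assume z0: "lt ts = (\<lambda>_. 0)"
        have "a = (\<lambda>\<alpha>. (1/ts) * l \<alpha>)"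
        proof
          fix \<alpha>
          have "l \<alpha> - ts * a \<alpha> = 0" using fun_cong[OF z0, of \<alpha>] by (simp add: lt_def)
          then show "a \<alpha> = (1/ts) * l \<alpha>" using ts1 by (simp add: field_simps)
        qed
        then show False using n1 by blast
      qed
      have sc: "(\<lambda>\<alpha>. ts * a \<alpha>) \<in> sigma_dual Z" using sd_scale[OF aC, of ts] ts1 by simp
      have lowl: "lower Z (lt ts) \<subseteq> lower Z l"
      proof
        fix x assume "x \<in> lower Z (lt ts)"
        then have xC: "x \<in> sigma_dual Z" and dx: "(\<lambda>\<alpha>. lt ts \<alpha> - x \<alpha>) \<in> sigma_dual Z"
          by (auto simp: lower_def)
        have "(\<lambda>\<alpha>. lt ts \<alpha> - x \<alpha> + ts * a \<alpha>) \<in> sigma_dual Z" using sd_add[OF dx sc] by simp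
        moreover have "(\<lambda>\<alpha>. lt ts \<alpha> - x \<alpha> + ts * a \<alpha>) = (\<lambda>\<alpha>. l \<alpha> - x \<alpha>)" by (auto simp: lt_def)
        ultimately show "x \<in> lower Z l" using xC by (simp add: lower_def)
      qed
      have ltsS: "lt ts \<in> S"
      proof -
        have "(\<lambda>\<alpha>. L0 \<alpha> - l \<alpha> + ts * a \<alpha>) \<in> sigma_dual Z" using sd_add[OF ll sc] by simp
        moreover have "(\<lambda>\<alpha>. L0 \<alpha> - l \<alpha> + ts * a \<alpha>) = (\<lambda>\<alpha>. L0 \<alpha> - lt ts \<alpha>)" by (auto simp: lt_def)
        ultimately show ?thesis using ltsC ltsne by (simp add: S_def lower_def)
      qed
      have ainl: "a \<in> lower Z l"
      proof -
        have "(\<lambda>\<alpha>. l \<alpha> - a \<alpha>) = b" using lab by auto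
        then show ?thesis using aC bC by (simp add: lower_def)
      qed
      have notin: "gram a \<notin> span (gram ` lower Z (lt ts))"
      proof
        assume "gram a \<in> span (gram ` lower Z (lt ts))"
        then obtain X u where X: "finite X" "X \<subseteq> gram ` lower Z (lt ts)" and ga0: "gram a = (\<Sum>g\<in>X. u g *\<^sub>R g)"
          unfolding span_explicit mem_Collect_eq by blast
        note ga = ga0[symmetric]
        define \<epsilon> where "\<epsilon> = 1 / (1 + (\<Sum>g\<in>X. \<bar>u g\<bar>))"
        have sp: "(\<Sum>g\<in>X. \<bar>u g\<bar>) \<ge> 0" by (simp add: sum_nonneg)
        have sp1: "1 + (\<Sum>g\<in>X. \<bar>u g\<bar>) > 0" using sp by linarith
        have epos: "\<epsilon> > 0" using sp1 by (simp add: \<epsilon>_def)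
        have eb: "\<epsilon> * (\<Sum>g\<in>X. \<bar>u g\<bar>) \<le> 1" using sp1 by (simp add: \<epsilon>_def field_simps)
        have qg: "0 \<le> qf g h \<and> qf g h \<le> qf (gram (lt ts)) h" if gX: "g \<in> X" for g h
        proof -
          obtain x where x: "x \<in> lower Z (lt ts)" "g = gram x" using X(2) gX by blast
          then have xC: "x \<in> sigma_dual Z" and dx: "(\<lambda>\<alpha>. lt ts \<alpha> - x \<alpha>) \<in> sigma_dual Z"
            by (auto simp: lower_def)
          have "qf (gram (\<lambda>\<alpha>. lt ts \<alpha> - x \<alpha>)) h \<ge> 0" using sd_qf[OF dx] .
          then show ?thesis using sd_qf[OF xC] x by (simp add: gram_diff qf_diff)
        qed
        have qlts: "qf (gram (lt ts)) h \<ge> 0" for h using sd_qf[OF ltsC] .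
        have "lt (ts + \<epsilon>) \<in> sigma_dual Z"
        proof -
          have e: "lt (ts+\<epsilon>) = (\<lambda>\<alpha>. lt ts \<alpha> - \<epsilon> * a \<alpha>)" by (auto simp: lt_def algebra_simps)
          have "\<forall>h. qf (gram (lt ts)) h - \<epsilon> * qf (gram a) h \<ge> 0"
          proof
            fix h
            have "qf (gram a) h = (\<Sum>g\<in>X. u g * qf g h)" unfolding ga[symmetric] qf_sum qf_scale ..
            also have "\<dots> \<le> (\<Sum>g\<in>X. \<bar>u g\<bar> * qf (gram (lt ts)) h)"
            proof (rule sum_mono)
              fix g assume g: "g \<in> X"
              have "u g * qf g h \<le> \<bar>u g\<bar> * qf g h"
                using qg[OF g, of h] by (intro mult_right_mono) auto
              also have "\<dots> \<le> \<bar>u g\<bar> * qf (gram (lt ts)) h"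
                using qg[OF g, of h] by (intro mult_left_mono) auto
              finally show "u g * qf g h \<le> \<bar>u g\<bar> * qf (gram (lt ts)) h" .
            qed
            also have "\<dots> = (\<Sum>g\<in>X. \<bar>u g\<bar>) * qf (gram (lt ts)) h" by (simp add: sum_distrib_right)
            finally have "\<epsilon> * qf (gram a) h \<le> \<epsilon> * ((\<Sum>g\<in>X. \<bar>u g\<bar>) * qf (gram (lt ts)) h)"
              using epos by (intro mult_left_mono) auto
            also have "\<dots> = (\<epsilon> * (\<Sum>g\<in>X. \<bar>u g\<bar>)) * qf (gram (lt ts)) h" by simp
            also have "\<dots> \<le> 1 * qf (gram (lt ts)) h"
              using eb qlts[of h] by (intro mult_right_mono) auto
            finally show "qf (gram (lt ts)) h - \<epsilon> * qf (gram a) h \<ge> 0" by simp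
          qed
          then show ?thesis unfolding e using sd_lin ltsC aC by blast
        qed
        then have "ts + \<epsilon> \<in> T" using ts1 epos by (simp add: T_def)
        then have "ts + \<epsilon> \<le> ts" using T_le by blast
        then show False using epos by simp
      qed
      have sub: "span (gram ` lower Z (lt ts)) \<subset> span (gram ` lower Z l)"
      proof
        show "span (gram ` lower Z (lt ts)) \<subseteq> span (gram ` lower Z l)"
          using lowl by (intro span_mono image_mono)
        have "gram a \<in> span (gram ` lower Z l)" using ainl by (intro span_base imageI)
        then show "span (gram ` lower Z (lt ts)) \<noteq> span (gram ` lower Z l)" using notin by blast
      qed
      have "dm (lt ts) < dm l" unfolding dm_def dim_span using dim_psubset[OF sub] .
      then show False using lmin[OF ltsS] by simp
    qed
  qed
  then show ?thesis using lS by (auto simp: S_def)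
qed




lemma exists_dual:
  fixes B :: "(real^'n::finite) set"
  assumes "independent B"
  shows "\<exists>h. \<forall>v\<in>B. h \<bullet> v = \<phi> v"
proof -
  obtain g :: "real^'n \<Rightarrow> real" where g: "linear g" "\<forall>x\<in>B. g x = \<phi> x"
    using linear_independent_extend[OF assms] by blast
  show ?thesis
  proof (intro exI ballI)
    fix v assume "v \<in> B"
    have "v \<bullet> adjoint g 1 = g v \<bullet> 1" by (rule adjoint_clauses(1)[OF g(1)])
    then show "adjoint g 1 \<bullet> v = \<phi> v" using g(2) \<open>v \<in> B\<close> by (simp add: inner_commute)
  qed
qed

lemma choose_pos:
  fixes A :: "('v \<Rightarrow> real) set"
  assumes "finite A" "finite B" "\<forall>a\<in>A. \<exists>v\<in>B. a v \<noteq> 0"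
  shows "\<exists>t. (\<forall>v\<in>B. t v > 0) \<and> (\<forall>a\<in>A. (\<Sum>v\<in>B. a v * t v) \<noteq> 0)"
  using assms
proof (induction A rule: finite_induct)
  case empty
  show ?case by (rule exI[of _ "\<lambda>_. 1"]) simp
next
  case (insert a A)
  then obtain t where t: "\<forall>v\<in>B. t v > 0" "\<forall>a\<in>A. (\<Sum>v\<in>B. a v * t v) \<noteq> 0" by auto
  show ?case
  proof (cases "(\<Sum>v\<in>B. a v * t v) = 0")
    case False
    then show ?thesis using t by auto
  next
    case True
    obtain v0 where v0: "v0 \<in> B" "a v0 \<noteq> 0" using insert.prems by auto
    define bad where "bad = (\<lambda>a'. - (\<Sum>v\<in>B. a' v * t v) / a' v0) ` A"
    have "finite bad" using insert.hyps by (simp add: bad_def)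
    then obtain s :: real where s: "s \<in> {0<..}" "s \<notin> bad"
      using infinite_Ioi[of 0] by (meson ex_in_conv finite_subset subsetI)
    define t' where "t' v = t v + (if v = v0 then s else 0)" for v
    have sum_t': "(\<Sum>v\<in>B. a' v * t' v) = (\<Sum>v\<in>B. a' v * t v) + s * a' v0" for a'
    proof -
      have "(\<Sum>v\<in>B. a' v * t' v) = (\<Sum>v\<in>B. a' v * t v) + (\<Sum>v\<in>B. a' v * (if v = v0 then s else 0))"
        by (simp add: t'_def distrib_left sum.distrib)
      also have "(\<Sum>v\<in>B. a' v * (if v = v0 then s else 0)) = (\<Sum>v\<in>B. if v = v0 then a' v * s else 0)"
        by (rule sum.cong) auto
      also have "\<dots> = s * a' v0"
        using v0(1) insert.prems(1) by simp
      finally show ?thesis .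
    qed
    show ?thesis
    proof (intro exI conjI ballI)
      fix v assume vB: "v \<in> B" then show "t' v > 0" using t(1) s(1) v0(1)
        by (auto simp: t'_def intro: add_pos_pos)
    next
      fix a' assume a': "a' \<in> insert a A"
      show "(\<Sum>v\<in>B. a' v * t' v) \<noteq> 0"
      proof (cases "a' = a")
        case True
        then show ?thesis using \<open>(\<Sum>v\<in>B. a v * t v) = 0\<close> sum_t' v0(2) s(1) by simp
      next
        case False
        then have aA: "a' \<in> A" using a' by simp
        show ?thesis
        proof (cases "a' v0 = 0")
          case True then show ?thesis using sum_t' t(2) aA by simp
        next
          case False
          show ?thesis
          proof
            assume "(\<Sum>v\<in>B. a' v * t' v) = 0"
            then have "s = - (\<Sum>v\<in>B. a' v * t v) / a' v0" using sum_t'[of a'] False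
              by (simp add: field_simps)
            then have "s \<in> bad" using aA by (auto simp: bad_def)
            then show False using s(2) by simp
          qed
        qed
      qed
    qed
  qed
qed

lemma dim1_span:
  fixes R :: "(real^'n::finite) set"
  assumes "dim R \<le> 1" "x \<in> R" "x \<noteq> 0" "z \<in> R"
  shows "z \<in> span {x}"
proof (rule ccontr)
  assume nz: "z \<notin> span {x}"
  then have zx: "z \<noteq> x" by (metis span_base singletonI)
  have "independent {x}" using assms(3) by (simp add: independent_insert)
  then have "independent (insert z {x})" using nz zx by (simp add: independent_insert)
  then have "card (insert z {x}) \<le> dim R"
    using assms(2,4) by (intro independent_card_le_dim) auto
  then show False using zx assms(1) by simp
qed

lemma range_in_span:
  fixes G :: "real^'n::finite^'n"
  assumes sym: "\<forall>i j. G$i$j = G$j$i"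
    and ker: "\<And>h. (\<forall>v\<in>B. h \<bullet> v = 0) \<Longrightarrow> G *v h = 0"
  shows "G *v x \<in> span B"
proof -
  obtain p r where p: "p \<in> span B" and r: "\<And>w. w \<in> span B \<Longrightarrow> orthogonal r w" and y: "G *v x = p + r"
    using orthogonal_subspace_decomp_exists[of B "G *v x"] by metis
  have "\<forall>v\<in>B. r \<bullet> v = 0" using r by (simp add: orthogonal_def span_base)
  then have Gr: "G *v r = 0" by (rule ker)
  have "r \<bullet> (G *v x) = x \<bullet> (G *v r)" by (rule sym_inner[OF sym])
  also have "\<dots> = 0" using Gr by simp
  finally have "r \<bullet> (p + r) = 0" using y by simp
  moreover have "r \<bullet> p = 0" using r[OF p] by (simp add: orthogonal_def)
  ultimately have "r \<bullet> r = 0" by (simp add: inner_add_right)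
  then have "r = 0" by simp
  then show ?thesis using y p by simp
qed




lemma cvec_eq0: "cvec y = 0 \<longleftrightarrow> y = 0"
  by (simp add: cvec_def vec_eq_iff)

lemma circuit:
  fixes Q :: "(real^'n::finite) set"
  assumes fin: "finite Q" and dep: "dependent Q" and nz: "0 \<notin> Q"
    and np: "\<forall>q1\<in>Q. \<forall>q2\<in>Q. q1 \<noteq> q2 \<longrightarrow> \<not> (\<exists>c. q1 = c *\<^sub>R q2)"
  shows "\<exists>u B c. u \<in> Q \<and> B \<subseteq> Q \<and> u \<notin> B \<and> independent B \<and> card B \<ge> 2 \<and>
           (\<forall>v\<in>B. c v \<noteq> 0) \<and> u = (\<Sum>v\<in>B. c v *\<^sub>R v)"
proof -
  obtain C where C: "C \<subseteq> Q" "dependent C" and Cmin: "\<And>C'. C' \<subseteq> Q \<and> dependent C' \<Longrightarrow> card C \<le> card C'"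
    using ex_has_least_nat[of "\<lambda>C. C \<subseteq> Q \<and> dependent C" Q card] dep by blast
  have Cfin: "finite C" using C(1) fin finite_subset by blast
  have "C \<noteq> {}" using C(2) independent_empty by blast
  then obtain u where uC: "u \<in> C" by blast
  define B where "B = C - {u}"
  have Bfin: "finite B" using Cfin by (simp add: B_def)
  have cardB: "card B = card C - 1" using uC Cfin by (simp add: B_def)
  have cardC: "card C > 0" using uC Cfin card_gt_0_iff by blast
  have CB: "C = insert u B" using uC by (auto simp: B_def)
  have uB: "u \<notin> B" by (simp add: B_def)
  have Bind: "independent B"
  proof (rule ccontr)
    assume "\<not> independent B"
    then have "card C \<le> card B" using Cmin[of B] C(1) by (auto simp: B_def)
    then show False using cardB cardC by simp
  qed
  have "u \<in> span B" using C(2) Bind uB independent_insert[of u B] unfolding CB by auto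
  then obtain c where ueq: "u = (\<Sum>v\<in>B. c v *\<^sub>R v)" using span_finite[OF Bfin] by auto
  have cnz: "\<forall>v\<in>B. c v \<noteq> 0"
  proof (intro ballI notI)
    fix v0 assume v0: "v0 \<in> B" and cz: "c v0 = 0"
    have "u = (\<Sum>v\<in>B - {v0}. c v *\<^sub>R v)"
      using ueq sum.remove[OF Bfin v0, of "\<lambda>v. c v *\<^sub>R v"] cz by simp
    also have "\<dots> \<in> span (B - {v0})" by (intro span_sum span_scale span_base) auto
    finally have "dependent (insert u (B - {v0}))" using uB independent_insert[of u "B - {v0}"] by auto
    moreover have "insert u (B - {v0}) \<subseteq> Q" using C(1) CB by auto
    ultimately have "card C \<le> card (insert u (B - {v0}))" using Cmin by blast
    also have "\<dots> = card B" using Bfin v0 uB card_gt_0_iff[of B] by (auto simp: card_Diff_singleton)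
    finally show False using cardB cardC by simp
  qed
  have "card B \<ge> 2"
  proof (rule ccontr)
    assume "\<not> card B \<ge> 2"
    then consider "card B = 0" | "card B = 1" by linarith
    then show False
    proof cases
      case 1
      then have "B = {}" using Bfin by simp
      then have "u = 0" using ueq by simp
      then show False using nz uC C(1) by auto
    next
      case 2
      then obtain v where "B = {v}" using card_1_singletonE by blast
      then have "u = c v *\<^sub>R v" "v \<in> Q" "u \<noteq> v" using ueq C(1) CB uB by auto
      then show False using np uC C(1) by blast
    qed
  qed
  then show ?thesis using uC C(1) CB uB Bind cnz ueq by blast
qed




theorem theorem4p1:
  fixes F :: "(nat \<times> (('n::finite \<Rightarrow> nat) \<Rightarrow> real)) set"
    and L :: "(real^'n) set"
    and p :: nat
  assumes forms: "\<forall>(d,f)\<in>F. is_form d f"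
    and nondeg: "idealX (Xpts F) 1 = {\<lambda>_. 0}"
    and quadrics: "\<forall>z. z \<noteq> 0 \<longrightarrow> (\<forall>f\<in>idealX (Xpts F) 2. ceval 2 f z = 0) \<longrightarrow> z \<in> Xpts F"
    and W: "subspace L" "dim L = p + 1"
    and zerodim: "\<exists>P. finite P \<and> (\<forall>z\<in>Xpts F. z \<noteq> 0 \<and> in_span_C L z \<longrightarrow> (\<exists>w\<in>P. \<exists>c. z = c *s w))"
    and points: "\<exists>Q. card Q = p + 2 \<and> Q \<subseteq> L \<and>
       (\<forall>q\<in>Q. q \<noteq> 0 \<and> cvec q \<in> Xpts F \<and> reduced_point (Xpts F) L q) \<and>
       (\<forall>q1\<in>Q. \<forall>q2\<in>Q. q1 \<noteq> q2 \<longrightarrow> \<not> (\<exists>c. q1 = c *\<^sub>R q2))"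
  shows "hankel_index (Xpts F) \<le> enat p"
proof -
  define Z where "Z = Xpts F"
  have quad: "\<And>z. z \<noteq> 0 \<Longrightarrow> (\<forall>f\<in>idealX Z 2. ceval 2 f z = 0) \<Longrightarrow> z \<in> Z"
    using quadrics Z_def by blast
  obtain P where Pfin: "finite P"
    and Pprop: "\<And>z. z \<in> Z \<Longrightarrow> z \<noteq> 0 \<Longrightarrow> in_span_C L z \<Longrightarrow> \<exists>w\<in>P. \<exists>c. z = c *s w"
    using zerodim Z_def by blast
  obtain Q where Qc: "card Q = p+2" and QL: "Q \<subseteq> L" and Qp: "\<forall>q\<in>Q. q \<noteq> 0 \<and> cvec q \<in> Z"
    and np: "\<forall>q1\<in>Q. \<forall>q2\<in>Q. q1 \<noteq> q2 \<longrightarrow> \<not> (\<exists>c. q1 = c *\<^sub>R q2)"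
    using points Z_def by blast
  have Qfin: "finite Q" using Qc card.infinite by fastforce
  have Qdep: "dependent Q"
  proof (rule ccontr)
    assume "\<not> dependent Q"
    then have "card Q \<le> dim L" using QL independent_card_le_dim by blast
    then show False using Qc W(2) by simp
  qed
  have Q0: "0 \<notin> Q" using Qp by auto
  obtain u B c where u: "u \<in> Q" and BQ: "B \<subseteq> Q" and uB: "u \<notin> B" and Bind: "independent B"
    and B2: "card B \<ge> 2" and cnz: "\<forall>v\<in>B. c v \<noteq> 0" and ueq: "u = (\<Sum>v\<in>B. c v *\<^sub>R v)"
    using circuit[OF Qfin Qdep Q0 np] by blast
  have Bfin: "finite B" using BQ Qfin finite_subset by blast
  have Bne: "B \<noteq> {}" using B2 by auto
  have cardB: "card B \<le> p + 1"
  proof -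
    have "card (insert u B) \<le> card Q" using u BQ Qfin by (intro card_mono) auto
    then show ?thesis using uB Bfin Qc by simp
  qed
  have spanBL: "span B \<subseteq> L"
    using BQ QL W(1) by (metis span_mono span_eq_iff order_trans)
  have uspan: "u \<in> span B" unfolding ueq by (intro span_sum span_scale span_base) auto
  have hu: "h \<bullet> u = (\<Sum>v\<in>B. c v * (h \<bullet> v))" for h
    unfolding ueq by (simp add: inner_sum_right)
  define Rset where "Rset = {y. y \<noteq> 0 \<and> y \<in> span B \<and> cvec y \<in> Z}"
  define Rw where "Rw w = {y\<in>Rset. \<exists>c. cvec y = c *s w}" for w
  define rep where "rep w = (SOME y. y \<in> Rw w)" for w
  define Y0 where "Y0 = rep ` {w\<in>P. Rw w \<noteq> {}}"
  have Y0fin: "finite Y0" using Pfin by (simp add: Y0_def)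
  have Y0R: "Y0 \<subseteq> Rset"
  proof
    fix y assume "y \<in> Y0"
    then obtain w where "Rw w \<noteq> {}" "y = rep w" by (auto simp: Y0_def)
    then have "y \<in> Rw w" unfolding rep_def by (metis some_in_eq)
    then show "y \<in> Rset" by (simp add: Rw_def)
  qed
  have repr: "\<exists>y0\<in>Y0. \<exists>r. y = r *\<^sub>R y0" if yR: "y \<in> Rset" for y
  proof -
    have y: "y \<noteq> 0" "y \<in> span B" "cvec y \<in> Z" using yR by (auto simp: Rset_def)
    have "in_span_C L (cvec y)"
      unfolding in_span_C_def
    proof (intro allI impI)
      fix a :: "real^'n" assume "\<forall>v\<in>L. a \<bullet> v = 0"
      then have ay: "a \<bullet> y = 0" using y(2) spanBL by auto
      have "(\<Sum>i\<in>UNIV. complex_of_real (a$i) * cvec y $ i) = complex_of_real (a \<bullet> y)"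
        by (simp add: cvec_def inner_vec_def)
      then show "(\<Sum>i\<in>UNIV. complex_of_real (a$i) * cvec y $ i) = 0" using ay by simp
    qed
    moreover have "cvec y \<noteq> 0" using y(1) cvec_eq0 by blast
    ultimately obtain w c0 where w: "w \<in> P" "cvec y = c0 *s w" using Pprop y(3) by blast
    have "y \<in> Rw w" using yR w by (auto simp: Rw_def)
    then have ne: "Rw w \<noteq> {}" by auto
    define y0 where "y0 = rep w"
    have y0R: "y0 \<in> Rw w" using ne unfolding y0_def rep_def by (metis some_in_eq)
    have y0Y: "y0 \<in> Y0" using w(1) ne by (auto simp: Y0_def y0_def)
    obtain c' where c': "cvec y0 = c' *s w" and y0nz: "y0 \<noteq> 0" using y0R by (auto simp: Rw_def Rset_def)
    from y0nz obtain i where i: "y0$i \<noteq> 0" by (metis vec_eq_iff zero_index)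
    define r where "r = y$i / y0$i"
    have "y = r *\<^sub>R y0"
    proof (subst vec_eq_iff, intro allI)
      fix j
      have "cvec y $ j * cvec y0 $ i = cvec y $ i * cvec y0 $ j" using w(2) c' by simp
      then have "complex_of_real (y$j * y0$i) = complex_of_real (y$i * y0$j)" by (simp add: cvec_def)
      then have "y$j * y0$i = y$i * y0$j" using of_real_eq_iff by blast
      then show "y$j = (r *\<^sub>R y0)$j" using i by (simp add: r_def field_simps)
    qed
    then show ?thesis using y0Y by blast
  qed
  define beta where "beta y = (SOME b. y = (\<Sum>v\<in>B. b v *\<^sub>R v))" for y
  have beta: "y = (\<Sum>v\<in>B. beta y v *\<^sub>R v)" if "y \<in> span B" for y
  proof -
    have "\<exists>b. y = (\<Sum>v\<in>B. b v *\<^sub>R v)" using that span_finite[OF Bfin] by auto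
    then show ?thesis unfolding beta_def by (rule someI_ex)
  qed
  define A where "A = (\<lambda>y. \<lambda>v. beta y v * c v) ` Y0"
  have Anz: "\<forall>a\<in>A. \<exists>v\<in>B. a v \<noteq> 0"
  proof
    fix a assume "a \<in> A"
    then obtain y where yY: "y \<in> Y0" and a: "a = (\<lambda>v. beta y v * c v)" by (auto simp: A_def)
    have y: "y \<noteq> 0" "y \<in> span B" using yY Y0R by (auto simp: Rset_def)
    show "\<exists>v\<in>B. a v \<noteq> 0"
    proof (rule ccontr)
      assume "\<not> (\<exists>v\<in>B. a v \<noteq> 0)"
      then have "\<forall>v\<in>B. beta y v = 0" using cnz a by auto
      then have "y = 0" using beta[OF y(2)] by simp
      then show False using y(1) by simp
    qed
  qed
  obtain t where tpos: "\<forall>v\<in>B. t v > 0" and tA: "\<forall>a\<in>A. (\<Sum>v\<in>B. a v * t v) \<noteq> 0"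
    using choose_pos[of A B] Anz Bfin Y0fin by (auto simp: A_def)
  obtain h0 where h0: "\<forall>v\<in>B. h0 \<bullet> v = c v * t v" using exists_dual[OF Bind, of "\<lambda>v. c v * t v"] by blast
  have h0_span: "h0 \<bullet> y = (\<Sum>v\<in>B. beta y v * c v * t v)" if "y \<in> span B" for y
  proof -
    have "h0 \<bullet> y = (\<Sum>v\<in>B. beta y v * (h0 \<bullet> v))"
      by (subst beta[OF that]) (simp add: inner_sum_right)
    also have "\<dots> = (\<Sum>v\<in>B. beta y v * c v * t v)" using h0 by (simp add: mult.assoc)
    finally show ?thesis .
  qed
  have h0R: "h0 \<bullet> y \<noteq> 0" if yR: "y \<in> Rset" for y
  proof -
    obtain y0 r where y0: "y0 \<in> Y0" "y = r *\<^sub>R y0" using repr[OF yR] by blast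
    have "r \<noteq> 0" using yR y0(2) by (auto simp: Rset_def)
    moreover have "h0 \<bullet> y0 \<noteq> 0"
    proof -
      have "(\<lambda>v. beta y0 v * c v) \<in> A" using y0(1) by (auto simp: A_def)
      then have "(\<Sum>v\<in>B. beta y0 v * c v * t v) \<noteq> 0" using tA by auto
      moreover have "y0 \<in> span B" using y0(1) Y0R by (auto simp: Rset_def)
      ultimately show ?thesis using h0_span by simp
    qed
    ultimately show ?thesis using y0(2) by simp
  qed
  define Y where "Y = (\<Sum>v\<in>B. (c v)^2 * t v)"
  have Ypos: "Y > 0" unfolding Y_def using Bfin Bne tpos cnz
    by (intro sum_pos) auto
  have h0u: "h0 \<bullet> u = Y" using hu[of h0] h0 by (simp add: Y_def power2_eq_square mult.assoc)
  define lf where "lf = (\<lambda>\<alpha>. (\<Sum>v\<in>B. (1 / t v) * evp v \<alpha>) - (1 / Y) * evp u \<alpha>)"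
  have pe: "pairing lf f = (\<Sum>v\<in>B. (1 / t v) * pairing (evp v) f) - (1 / Y) * pairing (evp u) f" for f
    unfolding pairing_def lf_def
    by (simp add: left_diff_distrib sum_subtractf sum_distrib_right sum_distrib_left sum.swap[of _ B] mult.assoc)
  have pev: "pairing (evp x) (linprod h h) = (h \<bullet> x)^2" for x h
    by (simp add: pairing_Q gram_evp qf_outer)
  have Qlf: "qf (gram lf) h = (\<Sum>v\<in>B. (1 / t v) * (h \<bullet> v)^2) - (1 / Y) * (h \<bullet> u)^2" for h
    using pe[of "linprod h h"] by (simp add: pairing_Q gram_evp qf_outer)
  have CS: "(h \<bullet> u)^2 \<le> Y * (\<Sum>v\<in>B. (1 / t v) * (h \<bullet> v)^2)" for h
  proof -
    have "(h \<bullet> u)^2 = (\<Sum>v\<in>B. (c v * sqrt (t v)) * ((h \<bullet> v) / sqrt (t v)))^2"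
      unfolding hu using tpos by (intro arg_cong[where f="\<lambda>x. x^2"] sum.cong) auto
    also have "\<dots> \<le> (\<Sum>v\<in>B. (c v * sqrt (t v))^2) * (\<Sum>v\<in>B. ((h \<bullet> v) / sqrt (t v))^2)"
      by (rule Cauchy_Schwarz_ineq_sum)
    also have "(\<Sum>v\<in>B. (c v * sqrt (t v))^2) = Y"
      unfolding Y_def using tpos by (intro sum.cong) (auto simp: power_mult_distrib)
    also have "(\<Sum>v\<in>B. ((h \<bullet> v) / sqrt (t v))^2) = (\<Sum>v\<in>B. (1 / t v) * (h \<bullet> v)^2)"
      using tpos by (intro sum.cong) (auto simp: power_divide)
    finally show ?thesis .
  qed
  have lfpsd: "qf (gram lf) h \<ge> 0" for h
  proof -
    have "(1 / Y) * (h \<bullet> u)^2 \<le> (1 / Y) * (Y * (\<Sum>v\<in>B. (1 / t v) * (h \<bullet> v)^2))"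
      using CS[of h] Ypos by (intro mult_left_mono) auto
    also have "\<dots> = (\<Sum>v\<in>B. (1 / t v) * (h \<bullet> v)^2)" using Ypos by simp
    finally show ?thesis unfolding Qlf by simp
  qed
  have rz: "reval 2 f x = 0" if "x \<in> Q" "f \<in> idealX Z 2" for x f
  proof -
    have "ceval 2 f (cvec x) = 0" using that Qp by (auto simp: idealX_def)
    then show ?thesis by (simp add: ceval_cvec)
  qed
  have lfC: "lf \<in> sigma_dual Z"
    unfolding sd_iff
  proof (intro conjI ballI allI lfpsd)
    show "is_dual2 lf" by (simp add: is_dual2_def lf_def evp_def)
  next
    fix f assume f: "f \<in> idealX Z 2"
    have "\<forall>v\<in>B. pairing (evp v) f = 0" using rz f BQ by (auto simp: pairing_evp)
    moreover have "pairing (evp u) f = 0" using rz f u by (auto simp: pairing_evp)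
    ultimately show "pairing lf f = 0" unfolding pe by simp
  qed
  obtain v0 where v0: "v0 \<in> B" using Bne by blast
  obtain v1 where v1: "v1 \<in> B" "v1 \<noteq> v0"
  proof -
    have "B - {v0} \<noteq> {}" using B2 v0 Bfin
      by (metis Diff_empty Diff_insert0 card.insert_remove card_1_singleton_iff insert_Diff
          card_Diff_singleton le_antisym nat_le_linear not_less_eq_eq numeral_2_eq_2 one_le_numeral)
    then show ?thesis using that by blast
  qed
  have Ygt: "Y > (c v0)^2 * t v0"
  proof -
    have "Y = (c v0)^2 * t v0 + (\<Sum>v\<in>B - {v0}. (c v)^2 * t v)"
      unfolding Y_def by (rule sum.remove[OF Bfin v0])
    moreover have "(\<Sum>v\<in>B - {v0}. (c v)^2 * t v) \<ge> (c v1)^2 * t v1"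
    proof (rule member_le_sum)
      show "v1 \<in> B - {v0}" using v1 by simp
      show "finite (B - {v0})" using Bfin by simp
      fix x assume "x \<in> B - {v0} - {v1}"
      then have "t x > 0" using tpos by auto
      then show "0 \<le> (c x)^2 * t x" by (metis less_imp_le mult_nonneg_nonneg zero_le_power2)
    qed
    moreover have "(c v1)^2 * t v1 > 0" using v1 cnz tpos by auto
    ultimately show ?thesis by linarith
  qed
  have lfnz: "lf \<noteq> (\<lambda>_. 0)"
  proof
    assume lf0: "lf = (\<lambda>_. 0)"
    obtain h1 where h1: "\<forall>v\<in>B. h1 \<bullet> v = (if v = v0 then 1 else 0)"
      using exists_dual[OF Bind, of "\<lambda>v. if v = v0 then 1 else 0"] by blast
    have s1: "(\<Sum>v\<in>B. (1 / t v) * (h1 \<bullet> v)^2) = 1 / t v0"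
    proof -
      have "(\<Sum>v\<in>B. (1 / t v) * (h1 \<bullet> v)^2) = (\<Sum>v\<in>B. if v = v0 then 1 / t v0 else 0)"
        using h1 by (intro sum.cong) auto
      then show ?thesis using v0 Bfin by simp
    qed
    have s2: "h1 \<bullet> u = c v0"
    proof -
      have "h1 \<bullet> u = (\<Sum>v\<in>B. if v = v0 then c v0 else 0)"
        unfolding hu using h1 by (intro sum.cong) auto
      then show ?thesis using v0 Bfin by simp
    qed
    have "qf (gram lf) h1 = 1 / t v0 - (c v0)^2 / Y" using Qlf[of h1] s1 s2 by simp
    moreover have "(c v0)^2 / Y < 1 / t v0"
      using Ygt Ypos tpos v0 by (simp add: divide_less_eq field_simps)
    moreover have "qf (gram lf) h1 = 0" using lf0 by (simp add: gram_def qf_def)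
    ultimately show False by simp
  qed
  obtain ls where ext: "extreme_ray (sigma_dual Z) ls" and lslow: "ls \<in> lower Z lf"
    using exists_extreme[OF lfC lfnz] by blast
  have lsC: "ls \<in> sigma_dual Z" and dC: "(\<lambda>\<alpha>. lf \<alpha> - ls \<alpha>) \<in> sigma_dual Z"
    using lslow by (auto simp: lower_def)
  have lsne: "ls \<noteq> (\<lambda>_. 0)" using ext by (simp add: extreme_ray_def)
  define G where "G = gram ls"
  have Gsym: "\<forall>i j. G$i$j = G$j$i" unfolding G_def using gram_sym' .
  have kerls: "G *v h = 0" if q0: "qf (gram lf) h = 0" for h
  proof -
    have "qf (gram (\<lambda>\<alpha>. lf \<alpha> - ls \<alpha>)) h \<ge> 0" using sd_qf[OF dC] .
    then have "qf (gram ls) h \<le> 0" using q0 by (simp add: gram_diff qf_diff)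
    then have "qf (gram ls) h = 0" using sd_qf[OF lsC, of h] by simp
    then show ?thesis unfolding G_def by (rule sd_kernel[OF lsC])
  qed
  have ker1: "G *v h = 0" if "\<forall>v\<in>B. h \<bullet> v = 0" for h
  proof (rule kerls)
    have "h \<bullet> u = 0" using that by (simp add: hu)
    then show "qf (gram lf) h = 0" using that by (simp add: Qlf)
  qed
  have ker2: "G *v h0 = 0"
  proof (rule kerls)
    have "(\<Sum>v\<in>B. (1 / t v) * (h0 \<bullet> v)^2) = Y"
      unfolding Y_def using h0 tpos by (intro sum.cong) (auto simp: power2_eq_square field_simps)
    then show "qf (gram lf) h0 = 0" using Ypos by (simp add: Qlf h0u power2_eq_square)
  qed
  have rng: "G *v x \<in> span B" for x by (rule range_in_span[OF Gsym ker1])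
  have orth: "h0 \<bullet> (G *v x) = 0" for x
  proof -
    have "h0 \<bullet> (G *v x) = x \<bullet> (G *v h0)" by (rule sym_inner[OF Gsym])
    then show ?thesis using ker2 by simp
  qed
  define S0 where "S0 = span B \<inter> {y. h0 \<bullet> y = 0}"
  have S0sub: "subspace S0" unfolding S0_def
    by (intro subspace_inter subspace_span subspace_hyperplane)
  have rangeS0: "range (\<lambda>x. G *v x) \<subseteq> S0" using rng orth by (auto simp: S0_def)
  have dimS0: "dim S0 < card B"
  proof -
    have "u \<notin> S0" using h0u Ypos by (simp add: S0_def)
    then have "S0 \<subset> span B" using uspan by (auto simp: S0_def)
    moreover have sp0: "span S0 = S0" using S0sub span_eq_iff by blast
    ultimately have "span S0 \<subset> span (span B)" by (simp only: sp0 span_span)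
    then have "dim S0 < dim (span B)" by (rule dim_psubset)
    then show ?thesis by (simp add: dim_span dim_eq_card_independent[OF Bind])
  qed
  have rankle: "rank G \<le> p"
  proof -
    have "rank G = dim (range (\<lambda>x. G *v x))" by (rule rank_dim_range)
    also have "\<dots> \<le> dim S0" using rangeS0 by (rule dim_subset)
    finally show ?thesis using dimS0 cardB by linarith
  qed
  have rankgt: "rank G > 1"
  proof (rule ccontr)
    assume "\<not> rank G > 1"
    then have dR: "dim (range (\<lambda>x. G *v x)) \<le> 1" by (simp add: rank_dim_range)
    have Gne: "G \<noteq> 0"
    proof
      assume "G = 0"
      then have "ls = (\<lambda>_. 0)" using lsC dual2_zero_gram by (auto simp: sd_iff G_def)
      then show False using lsne by simp
    qed
    have col: "(G *v axis j 1)$i = G$i$j" for i j by (simp add: matrix_vector_mult_basis column_def)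
    obtain j0 where j0: "G *v axis j0 1 \<noteq> 0"
    proof -
      have "\<exists>j. G *v axis j 1 \<noteq> 0"
      proof (rule ccontr)
        assume "\<not> (\<exists>j. G *v axis j 1 \<noteq> 0)"
        then have "\<forall>i j. G$i$j = 0" using col by (metis zero_index)
        then have "G = 0" by (simp add: vec_eq_iff)
        then show False using Gne by simp
      qed
      then show ?thesis using that by blast
    qed
    define x where "x = G *v axis j0 1"
    have "\<exists>g. G *v axis j 1 = g *\<^sub>R x" for j
    proof -
      have "G *v axis j 1 \<in> span {x}"
        using dim1_span[OF dR _ j0[folded x_def]] by (auto simp: x_def)
      then show ?thesis by (auto simp: span_singleton)
    qed
    then obtain g where g: "\<And>j. G *v axis j 1 = g j *\<^sub>R x" by metis
    have Gij: "G$i$j = g j * x$i" for i j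
    proof -
      have "G$i$j = (G *v axis j 1)$i" using col by simp
      also have "\<dots> = g j * x$i" using g[of j] by simp
      finally show ?thesis .
    qed
    from j0 obtain i0 where i0: "x$i0 \<noteq> 0" unfolding x_def by (metis vec_eq_iff zero_index)
    define lam where "lam = g i0 / x$i0"
    have gj: "g j = lam * x$j" for j
    proof -
      have "g j * x$i0 = g i0 * x$j" using Gsym Gij by metis
      then show ?thesis using i0 by (simp add: lam_def field_simps)
    qed
    have Glam: "G$i$j = lam * (x$i * x$j)" for i j using Gij gj by (simp add: mult_ac)
    have xx: "x \<bullet> x > 0" using j0 by (simp add: x_def)
    have "qf G x = lam * (x \<bullet> x)^2"
      by (simp add: qf_def Glam inner_vec_def power2_eq_square sum_distrib_left sum_product mult_ac)
    moreover have "qf G x \<ge> 0" using sd_qf[OF lsC] by (simp add: G_def)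
    ultimately have "lam \<ge> 0" using xx by (simp add: zero_le_mult_iff)
    moreover have "lam \<noteq> 0"
    proof
      assume "lam = 0" then have "G = 0" using Glam by (simp add: vec_eq_iff)
      then show False using Gne by simp
    qed
    ultimately have lpos: "lam > 0" by simp
    define yv where "yv = sqrt lam *\<^sub>R x"
    have yvG: "yv = G *v (sqrt lam *\<^sub>R axis j0 1)" by (simp add: yv_def x_def matrix_vector_mult_scaleR)
    have yv0: "yv \<noteq> 0" using lpos j0 by (simp add: yv_def x_def)
    have Geq: "G = gram (evp yv)"
      unfolding gram_evp using lpos by (simp add: vec_eq_iff Glam yv_def mult_ac)
    have lsev: "ls = evp yv"
      by (rule gram_inj) (use lsC Geq in \<open>auto simp: sd_iff evp_dual2 G_def\<close>)
    have "cvec yv \<in> Z"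
    proof (rule quad)
      show "cvec yv \<noteq> 0" using yv0 cvec_eq0 by blast
      show "\<forall>f\<in>idealX Z 2. ceval 2 f (cvec yv) = 0"
      proof
        fix f assume "f \<in> idealX Z 2"
        then have "pairing ls f = 0" using lsC by (simp add: sd_iff)
        then show "ceval 2 f (cvec yv) = 0" by (simp add: ceval_cvec lsev pairing_evp)
      qed
    qed
    then have "yv \<in> Rset" using yv0 rng[of "sqrt lam *\<^sub>R axis j0 1"] yvG by (simp add: Rset_def)
    then have "h0 \<bullet> yv \<noteq> 0" by (rule h0R)
    then show False using orth yvG by simp
  qed
  have lr: "lrank ls = rank G" by (simp add: lrank_def G_def gram_def)
  have ex: "\<exists>l. extreme_ray (sigma_dual Z) l \<and> lrank l > 1" using ext rankgt lr by auto
  have "(LEAST r. r > 1 \<and> (\<exists>l. extreme_ray (sigma_dual Z) l \<and> lrank l = r)) \<le> rank G"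
    by (rule Least_le) (use ext rankgt lr in auto)
  then have "hankel_index Z \<le> enat (rank G)" using ex by (simp add: hankel_index_def)
  also have "\<dots> \<le> enat p" using rankle by simp
  finally show ?thesis by (simp add: Z_def)
qed


end
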